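(* Let $G=(V,E)$ be a connected undirected graph on $n\geq 3$ nodes with positive edge weights $w$, and run the distributed algorithm described in the context synchronously at every node. Then every node $v\in V$ computes its betweenness centrality after $2\,\mathcal{D}(G)+1$ phases: at any time after the first $2\,\mathcal{D}(G)+1$ phases have been completed, the variable $C$ held by $v$ equals $\sum_{s\neq v}\mathsf{bc}_v(s)=(n-1)(n-2)\,\mathsf{bc}_v$, i.e. $\mathsf{bc}_v$ up to the normalization factor $1/((n-1)(n-2))$.
   Context: Graph notions. $G=(V,E)$ is connected, undirected, with weights $w(e)>0$; $N(v)$ is the set of neighbors of $v$ and $N[v]=N(v)\cup\{v\}$. The length of a path is the sum of its edge weights; $\mathrm{dist}(s,t)$ is the length of a shortest $s$–$t$ path. For $s\neq t$, $\mathrm{maxhop}(s,t)$ is the maximum number of edges of a shortest (minimum-length) $s$–$t$ path, $\mathrm{maxhop}(s,s)=0$, and $\mathcal{D}(G)=\max_{s,t\in V}\mathrm{maxhop}(s,t)$. $\sigma_{s,t}$ is the number of shortest $s$–$t$ paths ($\sigma_{s,s}=1$) and $\sigma_{s,t}(v)$ the number of those passing through $v$ ($\sigma_{s,s}(s)=1$). For $s\in V$, $\mathsf{bc}_v(s)=\sum_{t\neq v}\sigma_{s,t}(v)/\sigma_{s,t}$, and the betweenness centrality is $\mathsf{bc}_v=\frac{1}{(n-1)(n-2)}\sum_{s\neq v,t\neq v}\sigma_{s,t}(v)/\sigma_{s,t}$. Algorithm (at each node $v$). Initialization: for all $t\in V$: $D[t]=+\infty$, $\mathrm{NH}[t]=\mathrm{PH}[t]=\emptyset$,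 and for all $u\in N[v]$: $B[u,t]=0$, $S[u,t]=0$; then $S[v,v]=1$, $D[v]=0$. Execution proceeds in synchronous phases; in each phase every node $v$ sends, for every $t\in V$, the message $(t,D[t],S[v,t],B[v,t])$ to every neighbor, receives all messages sent to it by its neighbors in that phase, and processes each of them (in arbitrary order) as follows. On receipt of $(t,d,s,b)$ from $u\in N(v)$: remove $u$ from $\mathrm{NH}[t]$ and from $\mathrm{PH}[t]$; if $d+w(\{u,v\})<D[t]$ set $D[t]\leftarrow d+w(\{u,v\})$; else if $d+w(\{u,v\})=D[t]$ add $u$ to $\mathrm{NH}[t]$; else if $d-w(\{u,v\})=D[t]$ add $u$ to $\mathrm{PH}[t]$. Then set $S[u,t]\leftarrow s$, $B[u,t]\leftarrow b$; if $t\neq v$ set $S[v,t]\leftarrow\sum_{x\in\mathrm{NH}[t]}S[x,t]$; set $B[v,t]\leftarrow S[v,t]\cdot\sum_{x\in\mathrm{PH}[t]}\frac{B[x,t]+1}{S[x,t]}$ (a term with $S[x,t]=0$ is taken as $0$); finally set $C\leftarrow\sum_{x\neq v}B[v,x]$. *)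

theory Defs
  imports Complex_Main "HOL-Library.Extended_Real"
begin

definition wgraph :: "'a set \<Rightarrow> 'a set set \<Rightarrow> ('a set \<Rightarrow> real) \<Rightarrow> bool" where
  "wgraph V E w \<longleftrightarrow> finite V \<and>
     (\<forall>e\<in>E. \<exists>x y. e = {x, y} \<and> x \<noteq> y \<and> x \<in> V \<and> y \<in> V) \<and>
     (\<forall>e\<in>E. w e > 0)"

definition nbrs :: "'a set set \<Rightarrow> 'a \<Rightarrow> 'a set" where
  "nbrs E v = {u. {u, v} \<in> E}"

definition is_path :: "'a set \<Rightarrow> 'a set set \<Rightarrow> 'a \<Rightarrow> 'a \<Rightarrow> 'a list \<Rightarrow> bool" where
  "is_path V E s t p \<longleftrightarrow> p \<noteq> [] \<and> hd p = s \<and> last p = t \<and> set p \<subseteq> V \<and> distinct p \<and>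
     (\<forall>i. Suc i < length p \<longrightarrow> {p ! i, p ! Suc i} \<in> E)"

definition connected_graph :: "'a set \<Rightarrow> 'a set set \<Rightarrow> bool" where
  "connected_graph V E \<longleftrightarrow> (\<forall>s\<in>V. \<forall>t\<in>V. \<exists>p. is_path V E s t p)"

definition plen :: "('a set \<Rightarrow> real) \<Rightarrow> 'a list \<Rightarrow> real" where
  "plen w p = (\<Sum>i<length p - 1. w {p ! i, p ! Suc i})"

definition gdist :: "'a set \<Rightarrow> 'a set set \<Rightarrow> ('a set \<Rightarrow> real) \<Rightarrow> 'a \<Rightarrow> 'a \<Rightarrow> real" where
  "gdist V E w s t = Min (plen w ` {p. is_path V E s t p})"

definition spaths :: "'a set \<Rightarrow> 'a set set \<Rightarrow> ('a set \<Rightarrow> real) \<Rightarrow> 'a \<Rightarrow> 'a \<Rightarrow> 'a list set" where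
  "spaths V E w s t = {p. is_path V E s t p \<and> plen w p = gdist V E w s t}"

definition sigma :: "'a set \<Rightarrow> 'a set set \<Rightarrow> ('a set \<Rightarrow> real) \<Rightarrow> 'a \<Rightarrow> 'a \<Rightarrow> nat" where
  "sigma V E w s t = card (spaths V E w s t)"

definition sigma_via :: "'a set \<Rightarrow> 'a set set \<Rightarrow> ('a set \<Rightarrow> real) \<Rightarrow> 'a \<Rightarrow> 'a \<Rightarrow> 'a \<Rightarrow> nat" where
  "sigma_via V E w s t v = card {p \<in> spaths V E w s t. v \<in> set p}"

definition maxhop :: "'a set \<Rightarrow> 'a set set \<Rightarrow> ('a set \<Rightarrow> real) \<Rightarrow> 'a \<Rightarrow> 'a \<Rightarrow> nat" where
  "maxhop V E w s t = (if s = t then 0 else Max ((\<lambda>p. length p - 1) ` spaths V E w s t))"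

definition hopdiam :: "'a set \<Rightarrow> 'a set set \<Rightarrow> ('a set \<Rightarrow> real) \<Rightarrow> nat" where
  "hopdiam V E w = Max ((\<lambda>(s, t). maxhop V E w s t) ` (V \<times> V))"

definition bc_from :: "'a set \<Rightarrow> 'a set set \<Rightarrow> ('a set \<Rightarrow> real) \<Rightarrow> 'a \<Rightarrow> 'a \<Rightarrow> real" where
  "bc_from V E w v s = (\<Sum>t\<in>V - {v}. real (sigma_via V E w s t v) / real (sigma V E w s t))"

definition bc :: "'a set \<Rightarrow> 'a set set \<Rightarrow> ('a set \<Rightarrow> real) \<Rightarrow> 'a \<Rightarrow> real" where
  "bc V E w v = 1 / (real (card V - 1) * real (card V - 2)) *
     (\<Sum>s\<in>V - {v}. \<Sum>t\<in>V - {v}. real (sigma_via V E w s t v) / real (sigma V E w s t))"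

record 'a lstate =
  lD  :: "'a \<Rightarrow> ereal"
  lNH :: "'a \<Rightarrow> 'a set"
  lPH :: "'a \<Rightarrow> 'a set"
  lS  :: "'a \<Rightarrow> 'a \<Rightarrow> real"
  lB  :: "'a \<Rightarrow> 'a \<Rightarrow> real"
  lC  :: real

text \<open>Initial local state of node v (C is not initialized by the algorithm; we take 0).\<close>
definition init_state :: "'a \<Rightarrow> 'a lstate" where
  "init_state v = \<lparr> lD = (\<lambda>t. if t = v then 0 else \<infinity>), lNH = (\<lambda>_. {}), lPH = (\<lambda>_. {}),
      lS = (\<lambda>x t. if x = v \<and> t = v then 1 else 0), lB = (\<lambda>_ _. 0), lC = 0 \<rparr>"

definition upd_dist :: "'a \<Rightarrow> ereal \<Rightarrow> ereal \<Rightarrow> 'a lstate \<Rightarrow> 'a \<Rightarrow> 'a lstate" where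
  "upd_dist u d wuv \<sigma> t =
     (let \<sigma>0 = \<sigma>\<lparr>lNH := (lNH \<sigma>)(t := lNH \<sigma> t - {u}), lPH := (lPH \<sigma>)(t := lPH \<sigma> t - {u})\<rparr> in
      if d + wuv < lD \<sigma>0 t then \<sigma>0\<lparr>lD := (lD \<sigma>0)(t := d + wuv)\<rparr>
      else if d + wuv = lD \<sigma>0 t then \<sigma>0\<lparr>lNH := (lNH \<sigma>0)(t := insert u (lNH \<sigma>0 t))\<rparr>
      else if d - wuv = lD \<sigma>0 t then \<sigma>0\<lparr>lPH := (lPH \<sigma>0)(t := insert u (lPH \<sigma>0 t))\<rparr>
      else \<sigma>0)"

definition recv :: "'a set \<Rightarrow> ('a set \<Rightarrow> real) \<Rightarrow> 'a \<Rightarrow> 'a \<Rightarrow> 'a \<times> ereal \<times> real \<times> real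
                     \<Rightarrow> 'a lstate \<Rightarrow> 'a lstate" where
  "recv V w v u m \<sigma> =
     (case m of (t, d, s, b) \<Rightarrow>
       let \<sigma>1 = upd_dist u d (ereal (w {u, v})) \<sigma> t;
           \<sigma>2 = \<sigma>1\<lparr>lS := (lS \<sigma>1)(u := (lS \<sigma>1 u)(t := s)),
                    lB := (lB \<sigma>1)(u := (lB \<sigma>1 u)(t := b))\<rparr>;
           \<sigma>3 = (if t \<noteq> v then
                   \<sigma>2\<lparr>lS := (lS \<sigma>2)(v := (lS \<sigma>2 v)(t := (\<Sum>x\<in>lNH \<sigma>2 t. lS \<sigma>2 x t)))\<rparr>
                 else \<sigma>2);
           bvt = lS \<sigma>3 v t * (\<Sum>x\<in>lPH \<sigma>3 t.
                   if lS \<sigma>3 x t = 0 then 0 else (lB \<sigma>3 x t + 1) / lS \<sigma>3 x t);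
           \<sigma>4 = \<sigma>3\<lparr>lB := (lB \<sigma>3)(v := (lB \<sigma>3 v)(t := bvt))\<rparr>
       in \<sigma>4\<lparr>lC := (\<Sum>x\<in>V - {v}. lB \<sigma>4 v x)\<rparr>)"

definition msg :: "'a lstate \<Rightarrow> 'a \<Rightarrow> 'a \<Rightarrow> 'a \<times> ereal \<times> real \<times> real" where
  "msg \<sigma> u t = (t, lD \<sigma> t, lS \<sigma> u t, lB \<sigma> u t)"

definition deliver :: "'a set \<Rightarrow> ('a set \<Rightarrow> real) \<Rightarrow> ('a \<Rightarrow> 'a lstate) \<Rightarrow> 'a
                        \<Rightarrow> 'a lstate \<Rightarrow> 'a \<times> 'a \<Rightarrow> 'a lstate" where
  "deliver V w glob v \<sigma> ut = (case ut of (u, t) \<Rightarrow> recv V w v u (msg (glob u) u t) \<sigma>)"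

text \<open>ord k v: the (arbitrary) order in which node v processes the messages of phase k+1;
  each message is identified by its sender u and target t.\<close>
definition valid_orders :: "'a set \<Rightarrow> 'a set set \<Rightarrow> (nat \<Rightarrow> 'a \<Rightarrow> ('a \<times> 'a) list) \<Rightarrow> bool" where
  "valid_orders V E ord \<longleftrightarrow>
     (\<forall>k. \<forall>v\<in>V. distinct (ord k v) \<and> set (ord k v) = nbrs E v \<times> V)"

fun run :: "'a set \<Rightarrow> ('a set \<Rightarrow> real) \<Rightarrow> (nat \<Rightarrow> 'a \<Rightarrow> ('a \<times> 'a) list) \<Rightarrow> nat \<Rightarrow> 'a \<Rightarrow> 'a lstate" where
  "run V w ord 0 = init_state"
| "run V w ord (Suc k) =
     (\<lambda>v. foldl (deliver V w (run V w ord k) v) (run V w ord k v) (ord k v))"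

end

theory Submission
  imports Defs
begin


locale bcg =
  fixes V :: "'a set" and E :: "'a set set" and w :: "'a set \<Rightarrow> real"
  assumes wg: "wgraph V E w" and conn: "connected_graph V E"
begin

lemma finV: "finite V" using wg by (simp add: wgraph_def)

lemma edge: assumes "{u,v} \<in> E" shows "u \<in> V" "v \<in> V" "u \<noteq> v"
proof -
  obtain x y where "{u,v} = {x,y}" "x \<noteq> y" "x \<in> V" "y \<in> V"
    using wg assms unfolding wgraph_def by metis
  then show "u \<in> V" "v \<in> V" "u \<noteq> v" by (auto simp: doubleton_eq_iff)
qed

lemma wpos: "{u,v} \<in> E \<Longrightarrow> w {u,v} > 0" using wg by (simp add: wgraph_def)

fun pl :: "'a list \<Rightarrow> real" where
  "pl [] = 0" | "pl [x] = 0" | "pl (x # y # xs) = w {x,y} + pl (y # xs)"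

lemma plen_eq: "plen w p = pl p"
proof (induction p rule: pl.induct)
  case (3 x y xs)
  have "plen w (x # y # xs) = (\<Sum>i<Suc (length xs). w {(x#y#xs) ! i, (x#y#xs) ! Suc i})"
    by (simp add: plen_def)
  also have "\<dots> = w {x,y} + (\<Sum>i<length xs. w {(y#xs) ! i, (y#xs) ! Suc i})"
    by (subst sum.lessThan_Suc_shift) simp
  also have "\<dots> = w {x,y} + plen w (y # xs)" by (simp add: plen_def)
  finally show ?case using 3 by simp
qed (auto simp: plen_def)

abbreviation adj where "adj x y \<equiv> {x,y} \<in> E"

lemma is_path_iff: "is_path V E s t p \<longleftrightarrow> p \<noteq> [] \<and> hd p = s \<and> last p = t \<and> set p \<subseteq> V \<and> distinct p \<and> successively adj p"
  by (simp add: is_path_def successively_conv_nth)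

lemma pl_nonneg: "successively adj p \<Longrightarrow> pl p \<ge> 0"
  by (induction p rule: pl.induct) (auto intro: add_nonneg_nonneg less_imp_le wpos)

lemma pl_append: "pl (xs @ y # ys) = pl (xs @ [y]) + pl (y # ys)"
  by (induction xs rule: pl.induct) auto

lemma pl_snoc: "p \<noteq> [] \<Longrightarrow> pl (p @ [v]) = pl p + w {last p, v}"
  by (induction p rule: pl.induct) auto

lemma finite_paths: "finite {p. is_path V E s t p}"
proof (rule finite_subset)
  show "{p. is_path V E s t p} \<subseteq> {xs. set xs \<subseteq> V \<and> length xs \<le> card V}"
    using finV by (auto simp: is_path_iff distinct_card[symmetric] intro: card_mono)
  show "finite {xs. set xs \<subseteq> V \<and> length xs \<le> card V}"
    using finV by (rule finite_lists_length_le)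
qed

abbreviation d where "d s t \<equiv> gdist V E w s t"

lemma path_exists: "s \<in> V \<Longrightarrow> t \<in> V \<Longrightarrow> \<exists>p. is_path V E s t p"
  using conn by (simp add: connected_graph_def)

lemma dist_le: "is_path V E s t p \<Longrightarrow> d s t \<le> pl p"
  unfolding gdist_def plen_eq[symmetric]
  by (rule Min_le) (auto intro: finite_paths)

lemma dist_attained: assumes "s \<in> V" "t \<in> V" shows "\<exists>p. is_path V E s t p \<and> pl p = d s t"
proof -
  have "d s t \<in> plen w ` {p. is_path V E s t p}"
    unfolding gdist_def using path_exists[OF assms] finite_paths by (intro Min_in) auto
  then show ?thesis by (auto simp: plen_eq)
qed

lemma dist_nonneg: "s \<in> V \<Longrightarrow> t \<in> V \<Longrightarrow> d s t \<ge> 0"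
  using dist_attained pl_nonneg is_path_iff by metis

lemma dist_self: assumes "s \<in> V" shows "d s s = 0"
proof -
  have "is_path V E s s [s]" using assms by (simp add: is_path_iff)
  then have "d s s \<le> 0" using dist_le by fastforce
  then show ?thesis using dist_nonneg[OF assms assms] by simp
qed

lemma triangle: assumes "s \<in> V" "{u,v} \<in> E" shows "d s v \<le> d s u + w {u,v}"
proof -
  have uV: "u \<in> V" and vV: "v \<in> V" using edge assms by auto
  obtain p where p: "is_path V E s u p" "pl p = d s u" using dist_attained[OF assms(1) uV] by blast
  have wp: "w {u,v} > 0" using wpos assms by simp
  show ?thesis
  proof (cases "v \<in> set p")
    case True
    then obtain xs ys where pe: "p = xs @ v # ys" by (meson split_list)
    have "successively adj ((xs @ [v]) @ ys)" using p(1) pe by (simp add: is_path_iff)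
    hence sa: "successively adj (xs @ [v])" by (subst (asm) successively_append_iff) simp
    have "is_path V E s v (xs @ [v])"
      using p(1) sa unfolding is_path_iff pe by (cases xs) auto
    then have "d s v \<le> pl (xs @ [v])" by (rule dist_le)
    also have "\<dots> \<le> pl p"
    proof -
      have "successively adj (xs @ v # ys)" using p(1) pe by (simp add: is_path_iff)
      hence "successively adj (v # ys)" by (subst (asm) successively_append_iff) simp
      hence "pl (v # ys) \<ge> 0" by (rule pl_nonneg)
      moreover have "pl p = pl (xs @ [v]) + pl (v # ys)" unfolding pe by (rule pl_append)
      ultimately show ?thesis by simp
    qed
    finally show ?thesis using p wp by simp
  next
    case False
    have "is_path V E s v (p @ [v])"
      using p(1) False vV assms(2) unfolding is_path_iff by (auto simp: successively_append_iff)
    then have "d s v \<le> pl (p @ [v])" by (rule dist_le)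
    also have "\<dots> = pl p + w {u,v}" using p(1) by (simp add: pl_snoc is_path_iff)
    finally show ?thesis using p by simp
  qed
qed

end



lemma upd_dist_fields:
  "lD (upd_dist u dd W \<sigma> t) = (lD \<sigma>)(t := if dd + W < lD \<sigma> t then dd + W else lD \<sigma> t)"
  "lNH (upd_dist u dd W \<sigma> t) = (lNH \<sigma>)(t := if dd + W < lD \<sigma> t then lNH \<sigma> t - {u} else if dd + W = lD \<sigma> t then insert u (lNH \<sigma> t) else lNH \<sigma> t - {u})"
  "lPH (upd_dist u dd W \<sigma> t) = (lPH \<sigma>)(t := if dd + W \<le> lD \<sigma> t then lPH \<sigma> t - {u} else if dd - W = lD \<sigma> t then insert u (lPH \<sigma> t) else lPH \<sigma> t - {u})"
  "lS (upd_dist u dd W \<sigma> t) = lS \<sigma>"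
  "lB (upd_dist u dd W \<sigma> t) = lB \<sigma>"
  unfolding upd_dist_def Let_def by (auto simp: fun_eq_iff)

lemma recv_D: "lD (recv V w v u (t,dd,s,b) \<sigma>) r =
   (if t = r \<and> dd + ereal (w {u,v}) < lD \<sigma> r then dd + ereal (w {u,v}) else lD \<sigma> r)"
  unfolding recv_def Let_def by (simp add: upd_dist_fields)

lemma recv_NH: "lNH (recv V w v u (t,dd,s,b) \<sigma>) r =
   (if t = r then (if dd + ereal (w {u,v}) < lD \<sigma> r then lNH \<sigma> r - {u}
     else if dd + ereal (w {u,v}) = lD \<sigma> r then insert u (lNH \<sigma> r) else lNH \<sigma> r - {u}) else lNH \<sigma> r)"
  unfolding recv_def Let_def by (simp add: upd_dist_fields)

lemma recv_PH: "lPH (recv V w v u (t,dd,s,b) \<sigma>) r =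
   (if t = r then (if dd + ereal (w {u,v}) \<le> lD \<sigma> r then lPH \<sigma> r - {u}
     else if dd - ereal (w {u,v}) = lD \<sigma> r then insert u (lPH \<sigma> r) else lPH \<sigma> r - {u}) else lPH \<sigma> r)"
  unfolding recv_def Let_def by (simp add: upd_dist_fields)

lemma recv_S_other: "x \<noteq> v \<Longrightarrow> lS (recv V w v u (t,dd,s,b) \<sigma>) x r = (if x = u \<and> t = r then s else lS \<sigma> x r)"
  unfolding recv_def Let_def by (simp add: upd_dist_fields)

lemma recv_B_other: "x \<noteq> v \<Longrightarrow> lB (recv V w v u (t,dd,s,b) \<sigma>) x r = (if x = u \<and> t = r then b else lB \<sigma> x r)"
  unfolding recv_def Let_def by (simp add: upd_dist_fields)

lemma recv_C: "lC (recv V w v u (t,dd,s,b) \<sigma>) = (\<Sum>x\<in>V-{v}. lB (recv V w v u (t,dd,s,b) \<sigma>) v x)"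
  unfolding recv_def Let_def by (simp add: upd_dist_fields)

lemma recv_S_v: assumes "u \<noteq> v" "v \<notin> lNH \<sigma> r"
  shows "lS (recv V w v u (t,dd,s,b) \<sigma>) v r = (if t = r \<and> r \<noteq> v then
     (\<Sum>y\<in>lNH (recv V w v u (t,dd,s,b) \<sigma>) r. lS (recv V w v u (t,dd,s,b) \<sigma>) y r) else lS \<sigma> v r)"
proof (cases "t = r \<and> r \<noteq> v")
  case True
  have nv: "v \<notin> lNH (recv V w v u (t,dd,s,b) \<sigma>) r" using assms by (simp add: recv_NH)
  have "(\<Sum>y\<in>lNH (recv V w v u (t,dd,s,b) \<sigma>) r. lS (recv V w v u (t,dd,s,b) \<sigma>) y r)
      = (\<Sum>y\<in>lNH (recv V w v u (t,dd,s,b) \<sigma>) r. (if y = u \<and> t = r then s else lS \<sigma> y r))"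
  proof (intro sum.cong refl)
    fix y assume "y \<in> lNH (recv V w v u (t,dd,s,b) \<sigma>) r"
    then have "y \<noteq> v" using nv by auto
    then show "lS (recv V w v u (t,dd,s,b) \<sigma>) y r = (if y = u \<and> t = r then s else lS \<sigma> y r)"
      by (rule recv_S_other)
  qed
  then show ?thesis using True assms unfolding recv_def Let_def
    by (simp add: upd_dist_fields recv_NH) (auto intro!: sum.cong)
next
  case False
  then show ?thesis using assms unfolding recv_def Let_def by (auto simp add: upd_dist_fields)
qed

lemma recv_B_v_gen: assumes "v \<notin> lPH (recv V w v u (t,dd,s,b) \<sigma>) t"
  shows "lB (recv V w v u (t,dd,s,b) \<sigma>) v t =
     lS (recv V w v u (t,dd,s,b) \<sigma>) v t * (\<Sum>y\<in>lPH (recv V w v u (t,dd,s,b) \<sigma>) t.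
        if lS (recv V w v u (t,dd,s,b) \<sigma>) y t = 0 then 0
        else (lB (recv V w v u (t,dd,s,b) \<sigma>) y t + 1) / lS (recv V w v u (t,dd,s,b) \<sigma>) y t)"
proof -
  have "\<exists>\<sigma>3 c. recv V w v u (t,dd,s,b) \<sigma> = \<sigma>3\<lparr>lB := (lB \<sigma>3)(v := (lB \<sigma>3 v)(t := lS \<sigma>3 v t * (\<Sum>x\<in>lPH \<sigma>3 t.
                   if lS \<sigma>3 x t = 0 then 0 else (lB \<sigma>3 x t + 1) / lS \<sigma>3 x t))), lC := c\<rparr>"
    unfolding recv_def prod.case Let_def by (intro exI) (rule refl)
  then obtain \<sigma>3 c where e: "recv V w v u (t,dd,s,b) \<sigma> = \<sigma>3\<lparr>lB := (lB \<sigma>3)(v := (lB \<sigma>3 v)(t := lS \<sigma>3 v t * (\<Sum>x\<in>lPH \<sigma>3 t.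
                   if lS \<sigma>3 x t = 0 then 0 else (lB \<sigma>3 x t + 1) / lS \<sigma>3 x t))), lC := c\<rparr>" by blast
  have nv: "v \<notin> lPH \<sigma>3 t" using assms unfolding e by simp
  show ?thesis unfolding e using nv by (auto intro!: sum.cong)
qed

lemma recv_notr: "t \<noteq> r \<Longrightarrow> lS (recv V w v u (t,dd,s,b) \<sigma>) x r = lS \<sigma> x r \<and> lB (recv V w v u (t,dd,s,b) \<sigma>) x r = lB \<sigma> x r"
  unfolding recv_def Let_def by (auto simp: upd_dist_fields)




context bcg begin

definition stp where "stp r x y \<longleftrightarrow> adj x y \<and> d r y = d r x + w {x,y}"
definition tw where "tw r a b p \<longleftrightarrow> p \<noteq> [] \<and> hd p = a \<and> last p = b \<and> set p \<subseteq> V \<and> successively (stp r) p"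
definition T where "T r a b = {p. tw r a b p}"
definition tau where "tau r a b = card (T r a b)"

lemma stp_adj: "stp r x y \<Longrightarrow> adj x y" by (simp add: stp_def)

lemma walk_ineq:
  assumes "r \<in> V" "set p \<subseteq> V" "successively adj p" "p \<noteq> []"
  shows "d r (last p) \<le> d r (hd p) + pl p \<and> (d r (last p) = d r (hd p) + pl p \<longleftrightarrow> successively (stp r) p)"
  using assms(2-4)
proof (induction p rule: pl.induct)
  case (3 x y xs)
  have tri: "d r y \<le> d r x + w {x,y}" using triangle[OF assms(1)] 3(3) by simp
  have IH: "d r (last (y#xs)) \<le> d r y + pl (y#xs) \<and> (d r (last (y#xs)) = d r y + pl (y#xs) \<longleftrightarrow> successively (stp r) (y#xs))"
    using 3 by simp
  have a: "adj x y" using 3(3) by simp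
  show ?case using tri IH a by (auto simp: stp_def)
qed auto

lemma sorted_distinct_aux: "sorted_wrt (\<lambda>x y. f x < (f y::real)) xs \<Longrightarrow> distinct xs"
  by (induction xs) auto

lemma tw_props:
  assumes "r \<in> V" "tw r a b p"
  shows "d r b = d r a + pl p" "distinct p" "successively adj p"
proof -
  show sa: "successively adj p" using assms(2) unfolding tw_def by (auto elim: successively_mono simp: stp_def)
  show "d r b = d r a + pl p" using walk_ineq[OF assms(1) _ sa] assms(2) unfolding tw_def by auto
  have "successively (\<lambda>x y. d r x < d r y) p"
    using assms(2) unfolding tw_def by (auto elim!: successively_mono simp: stp_def intro: wpos)
  then have "sorted_wrt (\<lambda>x y. d r x < d r y) p"
    by (subst (asm) successively_conv_sorted_wrt) (auto simp: transp_def)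
  then show "distinct p" by (rule sorted_distinct_aux)
qed

lemma spaths_T: assumes "r \<in> V" shows "spaths V E w r t = T r r t"
proof (intro set_eqI iffI)
  fix p assume "p \<in> spaths V E w r t"
  then have p: "is_path V E r t p" "pl p = d r t" by (auto simp: spaths_def plen_eq)
  then show "p \<in> T r r t"
    using walk_ineq[OF assms, of p] dist_self[OF assms] by (auto simp: is_path_iff T_def tw_def)
next
  fix p assume "p \<in> T r r t"
  then have tw: "tw r r t p" by (simp add: T_def)
  note tp = tw_props[OF assms tw]
  show "p \<in> spaths V E w r t"
    using tw tp dist_self[OF assms] by (auto simp: spaths_def is_path_iff plen_eq tw_def)
qed

lemma sigma_tau: "r \<in> V \<Longrightarrow> sigma V E w r t = tau r r t"
  by (simp add: sigma_def tau_def spaths_T)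

lemma finite_T: assumes "r \<in> V" shows "finite (T r a b)"
proof (rule finite_subset)
  show "T r a b \<subseteq> {xs. set xs \<subseteq> V \<and> length xs \<le> card V}"
    using finV tw_props(2)[OF assms] by (auto simp: T_def tw_def distinct_card[symmetric] intro: card_mono)
  show "finite {xs. set xs \<subseteq> V \<and> length xs \<le> card V}"
    using finV by (rule finite_lists_length_le)
qed

lemma T_self: assumes "r \<in> V" "a \<in> V" shows "T r a a = {[a]}"
proof (intro set_eqI iffI)
  fix p assume "p \<in> T r a a"
  then have tw: "tw r a a p" by (simp add: T_def)
  have dp: "distinct p" using tw_props[OF assms(1) tw] by simp
  obtain x xs where p: "p = x # xs" using tw by (cases p) (auto simp: tw_def)
  have "xs = []"
  proof (rule ccontr)
    assume "xs \<noteq> []"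
    then have "last p \<in> set xs" using p by simp
    then show False using tw dp p by (auto simp: tw_def)
  qed
  then show "p \<in> {[a]}" using tw p by (auto simp: tw_def)
qed (use assms in \<open>auto simp: T_def tw_def\<close>)

lemma tau_self: "r \<in> V \<Longrightarrow> a \<in> V \<Longrightarrow> tau r a a = 1"
  by (simp add: tau_def T_self)

lemma T_nonempty: assumes "r \<in> V" "t \<in> V" shows "T r r t \<noteq> {}"
  using dist_attained[OF assms] spaths_T[OF assms(1), of t] by (auto simp: spaths_def plen_eq)

lemma tau_pos: "r \<in> V \<Longrightarrow> t \<in> V \<Longrightarrow> tau r r t > 0"
  using T_nonempty finite_T by (simp add: tau_def card_gt_0_iff)

lemma T_back: assumes "r \<in> V" "d r b < d r a" shows "T r a b = {}"
proof -
  { fix p assume "tw r a b p"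
    then have "successively adj p" "d r b = d r a + pl p" using tw_props[OF assms(1)] by auto
    then have False using pl_nonneg assms(2) by force }
  then show ?thesis by (auto simp: T_def)
qed

lemma T_last: assumes "r \<in> V" "a \<noteq> b"
  shows "T r a b = (\<Union>u\<in>{u. stp r u b}. (\<lambda>q. q @ [b]) ` T r a u)"
proof (intro set_eqI iffI)
  fix p assume "p \<in> T r a b"
  then have tw: "tw r a b p" by (simp add: T_def)
  define q where "q = butlast p"
  have pq: "p = q @ [b]" using tw append_butlast_last_id[of p] by (simp add: q_def tw_def)
  have qne: "q \<noteq> []" using pq tw assms(2) by (auto simp: tw_def)
  have "successively (stp r) (q @ [b])" using tw pq by (simp add: tw_def)
  then have s: "successively (stp r) q" "stp r (last q) b" using qne by (auto simp: successively_append_iff)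
  have "tw r a (last q) q" using tw pq qne s by (auto simp: tw_def)
  then show "p \<in> (\<Union>u\<in>{u. stp r u b}. (\<lambda>q. q @ [b]) ` T r a u)" using pq s by (auto simp: T_def)
next
  fix p assume "p \<in> (\<Union>u\<in>{u. stp r u b}. (\<lambda>q. q @ [b]) ` T r a u)"
  then obtain u q where u: "stp r u b" "tw r a u q" "p = q @ [b]" by (auto simp: T_def)
  have "b \<in> V" using edge stp_adj[OF u(1)] by auto
  then show "p \<in> T r a b" using u by (auto simp: T_def tw_def successively_append_iff)
qed

lemma finite_stp: "finite {u. stp r u b}" "finite {y. stp r a y}"
  by (rule finite_subset[OF _ finV], auto dest!: stp_adj dest: edge)+

lemma tau_last: assumes "r \<in> V" "a \<noteq> b" shows "tau r a b = (\<Sum>u\<in>{u. stp r u b}. tau r a u)"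
proof -
  have "tau r a b = card (\<Union>u\<in>{u. stp r u b}. (\<lambda>q. q @ [b]) ` T r a u)"
    unfolding tau_def using T_last[OF assms] by simp
  also have "\<dots> = (\<Sum>u\<in>{u. stp r u b}. card ((\<lambda>q. q @ [b]) ` T r a u))"
  proof (rule card_UN_disjoint)
    show "finite {u. stp r u b}" by (rule finite_stp)
    show "\<forall>i\<in>{u. stp r u b}. finite ((\<lambda>q. q @ [b]) ` T r a i)" using finite_T[OF assms(1)] by blast
    show "\<forall>i\<in>{u. stp r u b}. \<forall>j\<in>{u. stp r u b}. i \<noteq> j \<longrightarrow> (\<lambda>q. q @ [b]) ` T r a i \<inter> (\<lambda>q. q @ [b]) ` T r a j = {}"
      by (auto simp: T_def tw_def)
  qed
  also have "\<dots> = (\<Sum>u\<in>{u. stp r u b}. tau r a u)"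
    unfolding tau_def by (intro sum.cong refl card_image) (auto simp: inj_on_def)
  finally show ?thesis .
qed

lemma T_first: assumes "r \<in> V" "a \<noteq> b"
  shows "T r a b = (\<Union>y\<in>{y. stp r a y}. (\<lambda>q. a # q) ` T r y b)"
proof (intro set_eqI iffI)
  fix p assume "p \<in> T r a b"
  then have tw: "tw r a b p" by (simp add: T_def)
  define q where "q = tl p"
  have pq: "p = a # q" using tw by (cases p) (auto simp: q_def tw_def)
  have qne: "q \<noteq> []" using pq tw assms(2) by (auto simp: tw_def)
  have "successively (stp r) (a # q)" using tw pq by (simp add: tw_def)
  then have s: "successively (stp r) q" "stp r a (hd q)" using qne by (auto simp: successively_Cons)
  have "tw r (hd q) b q" using tw pq qne s by (auto simp: tw_def)
  then show "p \<in> (\<Union>y\<in>{y. stp r a y}. (\<lambda>q. a # q) ` T r y b)" using pq s by (auto simp: T_def)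
next
  fix p assume "p \<in> (\<Union>y\<in>{y. stp r a y}. (\<lambda>q. a # q) ` T r y b)"
  then obtain y q where u: "stp r a y" "tw r y b q" "p = a # q" by (auto simp: T_def)
  have "a \<in> V" using edge stp_adj[OF u(1)] by auto
  then show "p \<in> T r a b" using u by (auto simp: T_def tw_def successively_Cons)
qed

lemma tau_first: assumes "r \<in> V" "a \<noteq> b" shows "tau r a b = (\<Sum>y\<in>{y. stp r a y}. tau r y b)"
proof -
  have "tau r a b = card (\<Union>y\<in>{y. stp r a y}. (\<lambda>q. a # q) ` T r y b)"
    unfolding tau_def using T_first[OF assms] by simp
  also have "\<dots> = (\<Sum>y\<in>{y. stp r a y}. card ((\<lambda>q. a # q) ` T r y b))"
  proof (rule card_UN_disjoint)
    show "finite {y. stp r a y}" by (rule finite_stp)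
    show "\<forall>i\<in>{y. stp r a y}. finite ((\<lambda>q. a # q) ` T r i b)" using finite_T[OF assms(1)] by blast
    show "\<forall>i\<in>{y. stp r a y}. \<forall>j\<in>{y. stp r a y}. i \<noteq> j \<longrightarrow> (\<lambda>q. a # q) ` T r i b \<inter> (\<lambda>q. a # q) ` T r j b = {}"
      by (auto simp: T_def tw_def)
  qed
  also have "\<dots> = (\<Sum>y\<in>{y. stp r a y}. tau r y b)"
    unfolding tau_def by (intro sum.cong refl card_image) (auto simp: inj_on_def)
  finally show ?thesis .
qed

end



context bcg begin

lemma tw_snoc: assumes "tw r a u q" "stp r u b" shows "tw r a b (q @ [b])"
proof -
  have "b \<in> V" using edge stp_adj[OF assms(2)] by auto
  then show ?thesis using assms by (auto simp: tw_def successively_append_iff)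
qed

lemma tw_cons: assumes "stp r a y" "tw r y b q" shows "tw r a b (a # q)"
proof -
  have "a \<in> V" using edge stp_adj[OF assms(1)] by auto
  then show ?thesis using assms by (auto simp: tw_def successively_Cons)
qed

lemma tw_concat: assumes "tw r a v q" "tw r v b q'" shows "tw r a b (q @ tl q')"
proof -
  obtain zs where q': "q' = v # zs" using assms(2) by (cases q') (auto simp: tw_def)
  have sq: "successively (stp r) q" and sz: "successively (stp r) (v # zs)" using assms q' by (auto simp: tw_def)
  have "successively (stp r) (q @ zs)"
    using sq sz assms(1) by (auto simp: successively_append_iff successively_Cons tw_def)
  moreover have "last (q @ zs) = b" using assms q' by (cases zs) (auto simp: tw_def)
  ultimately show ?thesis using assms q' by (auto simp: tw_def)
qed

lemma T_split: assumes "r \<in> V" "v \<in> V"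
  shows "card {p \<in> T r a b. v \<in> set p} = tau r a v * tau r v b"
proof -
  define f where "f = (\<lambda>(q::'a list, q'::'a list). q @ tl q')"
  have img: "{p \<in> T r a b. v \<in> set p} = f ` (T r a v \<times> T r v b)"
  proof (intro set_eqI iffI)
    fix p assume "p \<in> {p \<in> T r a b. v \<in> set p}"
    then have tw: "tw r a b p" and vp: "v \<in> set p" by (auto simp: T_def)
    obtain xs ys where pe: "p = xs @ v # ys" using vp by (meson split_list)
    have s: "successively (stp r) ((xs @ [v]) @ ys)" using tw pe by (simp add: tw_def)
    have s1: "successively (stp r) (xs @ [v])" using s by (subst (asm) successively_append_iff) simp
    have s2: "successively (stp r) (v # ys)" using tw pe by (simp add: tw_def successively_append_iff)
    have "tw r a v (xs @ [v])" using tw s1 pe by (cases xs) (auto simp: tw_def)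
    moreover have "tw r v b (v # ys)" using tw s2 pe by (auto simp: tw_def)
    moreover have "p = f (xs @ [v], v # ys)" using pe by (simp add: f_def)
    ultimately show "p \<in> f ` (T r a v \<times> T r v b)" by (auto simp: T_def)
  next
    fix p assume "p \<in> f ` (T r a v \<times> T r v b)"
    then obtain q q' where q: "tw r a v q" "tw r v b q'" "p = q @ tl q'" by (auto simp: T_def f_def)
    obtain zs where q': "q' = v # zs" using q(2) by (cases q') (auto simp: tw_def)
    have sq: "successively (stp r) q" and sz: "successively (stp r) (v # zs)" using q q' by (auto simp: tw_def)
    have "successively (stp r) (q @ zs)"
      using sq sz q(1) by (auto simp: successively_append_iff successively_Cons tw_def)
    moreover have "last (q @ zs) = b" using q q' by (cases zs) (auto simp: tw_def)
    ultimately have "tw r a b p" using q q' by (auto simp: tw_def)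
    moreover have "v \<in> set p" using q(1,3) last_in_set[of q] by (auto simp: tw_def)
    ultimately show "p \<in> {p \<in> T r a b. v \<in> set p}" by (simp add: T_def)
  qed
  have inj: "inj_on f (T r a v \<times> T r v b)"
  proof (rule inj_onI)
    fix x y assume x: "x \<in> T r a v \<times> T r v b" and y: "y \<in> T r a v \<times> T r v b" and fe: "f x = f y"
    obtain q1 q1' where x1: "x = (q1, q1')" by (cases x)
    obtain q2 q2' where y1: "y = (q2, q2')" by (cases y)
    have t1: "tw r a v q1" "tw r v b q1'" "tw r a v q2" "tw r v b q2'" using x y x1 y1 by (auto simp: T_def)
    obtain xs1 where xs1: "q1 = xs1 @ [v]" using t1(1) unfolding tw_def by (metis append_butlast_last_id)
    obtain xs2 where xs2: "q2 = xs2 @ [v]" using t1(3) unfolding tw_def by (metis append_butlast_last_id)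
    obtain zs1 where zs1: "q1' = v # zs1" using t1(2) by (cases q1') (auto simp: tw_def)
    obtain zs2 where zs2: "q2' = v # zs2" using t1(4) by (cases q2') (auto simp: tw_def)
    have eq: "xs1 @ v # zs1 = xs2 @ v # zs2" using fe x1 y1 xs1 xs2 zs1 zs2 by (simp add: f_def)
    have "x \<in> f -` {f x}" by simp
    have "f x \<in> {p \<in> T r a b. v \<in> set p}" using img x by blast
    then have "tw r a b (xs1 @ v # zs1)" using x1 xs1 zs1 by (auto simp: T_def f_def)
    then have "distinct (xs1 @ v # zs1)" by (rule tw_props(2)[OF assms(1)])
    then have n: "v \<notin> set xs1" "v \<notin> set zs1" by auto
    have "xs1 = xs2 \<and> zs1 = zs2" using append_Cons_eq_iff[OF n, of xs2 zs2] eq by blast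
    then show "x = y" using x1 y1 xs1 xs2 zs1 zs2 by simp
  qed
  have "card {p \<in> T r a b. v \<in> set p} = card (T r a v \<times> T r v b)"
    unfolding img by (rule card_image[OF inj])
  then show ?thesis by (simp add: card_cartesian_product tau_def)
qed

definition F where "F r v = (\<Sum>t\<in>V-{v}. real (tau r v t) / real (tau r r t))"

lemma bc_from_tau: assumes "r \<in> V" "v \<in> V"
  shows "bc_from V E w v r = real (tau r r v) * F r v"
proof -
  have "bc_from V E w v r = (\<Sum>t\<in>V-{v}. real (tau r r v * tau r v t) / real (tau r r t))"
    unfolding bc_from_def sigma_via_def sigma_def spaths_T[OF assms(1)] T_split[OF assms]
    by (simp add: tau_def)
  also have "\<dots> = real (tau r r v) * F r v"
    by (simp add: F_def sum_distrib_left)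
  finally show ?thesis .
qed

lemma F_rec: assumes "r \<in> V" "v \<in> V"
  shows "F r v = (\<Sum>y\<in>{y. stp r v y}. 1 / real (tau r r y) + F r y)"
proof -
  have "F r v = (\<Sum>t\<in>V-{v}. \<Sum>y\<in>{y. stp r v y}. real (tau r y t) / real (tau r r t))"
    unfolding F_def
  proof (intro sum.cong refl)
    fix t assume "t \<in> V - {v}"
    then have "tau r v t = (\<Sum>y\<in>{y. stp r v y}. tau r y t)" using tau_first[OF assms(1)] by auto
    then show "real (tau r v t) / real (tau r r t) = (\<Sum>y\<in>{y. stp r v y}. real (tau r y t) / real (tau r r t))"
      by (simp add: sum_divide_distrib)
  qed
  also have "\<dots> = (\<Sum>y\<in>{y. stp r v y}. \<Sum>t\<in>V-{v}. real (tau r y t) / real (tau r r t))"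
    by (rule sum.swap)
  also have "\<dots> = (\<Sum>y\<in>{y. stp r v y}. 1 / real (tau r r y) + F r y)"
  proof (intro sum.cong refl)
    fix y assume "y \<in> {y. stp r v y}"
    then have st: "stp r v y" by simp
    have yV: "y \<in> V" using edge stp_adj[OF st] by auto
    have "d r v < d r y" using st wpos by (auto simp: stp_def)
    then have tyv: "tau r y v = 0" by (simp add: tau_def T_back[OF assms(1)])
    have "(\<Sum>t\<in>V-{v}. real (tau r y t) / real (tau r r t)) = (\<Sum>t\<in>V. real (tau r y t) / real (tau r r t))"
      using finV assms(2) tyv by (simp add: sum_diff1)
    also have "\<dots> = real (tau r y y) / real (tau r r y) + (\<Sum>t\<in>V-{y}. real (tau r y t) / real (tau r r t))"
      using finV yV by (rule sum.remove)
    also have "\<dots> = 1 / real (tau r r y) + F r y" by (simp add: tau_self[OF assms(1) yV] F_def)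
    finally show "(\<Sum>t\<in>V-{v}. real (tau r y t) / real (tau r r t)) = 1 / real (tau r r y) + F r y" .
  qed
  finally show ?thesis .
qed

lemma brandes: assumes "r \<in> V" "v \<in> V"
  shows "bc_from V E w v r = real (tau r r v) * (\<Sum>y\<in>{y. stp r v y}. (bc_from V E w y r + 1) / real (tau r r y))"
proof -
  have "F r v = (\<Sum>y\<in>{y. stp r v y}. (bc_from V E w y r + 1) / real (tau r r y))"
    unfolding F_rec[OF assms]
  proof (intro sum.cong refl)
    fix y assume "y \<in> {y. stp r v y}"
    then have yV: "y \<in> V" using edge stp_adj by blast
    have "tau r r y > 0" using tau_pos[OF assms(1) yV] .
    then show "1 / real (tau r r y) + F r y = (bc_from V E w y r + 1) / real (tau r r y)"
      by (simp add: bc_from_tau[OF assms(1) yV] field_simps)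
  qed
  then show ?thesis using bc_from_tau[OF assms] by simp
qed

end



context bcg begin

abbreviation H where "H \<equiv> hopdiam V E w"

lemma hop_bound: assumes "r \<in> V" "tw r r x p" shows "length p \<le> Suc H"
proof -
  have xV: "x \<in> V" using assms(2) last_in_set[of p] unfolding tw_def by blast
  have pS: "p \<in> spaths V E w r x" using assms spaths_T[OF assms(1)] by (simp add: T_def)
  have "length p - 1 \<le> maxhop V E w r x"
  proof (cases "r = x")
    case True
    then have "p = [r]" using assms T_self[OF assms(1) assms(1)] by (auto simp: T_def)
    then show ?thesis by simp
  next
    case False
    have "finite (spaths V E w r x)" using finite_T[OF assms(1)] spaths_T[OF assms(1)] by simp
    then have "length p - 1 \<le> Max ((\<lambda>p. length p - 1) ` spaths V E w r x)"
      using pS by (intro Max_ge) auto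
    then show ?thesis using False by (simp add: maxhop_def)
  qed
  also have "\<dots> \<le> H"
  proof -
    have "finite ((\<lambda>(s,t). maxhop V E w s t) ` (V \<times> V))" using finV by simp
    moreover have "maxhop V E w r x \<in> (\<lambda>(s,t). maxhop V E w s t) ` (V \<times> V)" using xV assms(1) by force
    ultimately show ?thesis unfolding hopdiam_def by (rule Max_ge)
  qed
  finally show ?thesis by simp
qed

lemma tw_exists: assumes "r \<in> V" "t \<in> V" obtains p where "tw r r t p"
  using T_nonempty[OF assms] by (auto simp: T_def)

lemma tw_len2: assumes "tw r a b p" "a \<noteq> b" shows "length p \<ge> 2"
proof -
  obtain x xs where p: "p = x # xs" using assms by (cases p) (auto simp: tw_def)
  have "xs \<noteq> []" using assms p by (auto simp: tw_def)
  then show ?thesis using p by (cases xs) auto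
qed

end

definition (in bcg) inv where
  "inv r v \<sigma> \<longleftrightarrow> lNH \<sigma> r \<subseteq> nbrs E v \<and> lPH \<sigma> r \<subseteq> nbrs E v \<and>
     (r \<noteq> v \<longrightarrow> lS \<sigma> v r = (\<Sum>y\<in>lNH \<sigma> r. lS \<sigma> y r)) \<and> (r = v \<longrightarrow> lS \<sigma> v r = 1) \<and>
     lB \<sigma> v r = lS \<sigma> v r * (\<Sum>y\<in>lPH \<sigma> r. if lS \<sigma> y r = 0 then 0 else (lB \<sigma> y r + 1) / lS \<sigma> y r)"

definition (in bcg) invC where "invC v \<sigma> \<longleftrightarrow> lC \<sigma> = (\<Sum>x\<in>V-{v}. lB \<sigma> v x)"

context bcg begin

lemma nbrs_edge: "u \<in> nbrs E v \<Longrightarrow> {u,v} \<in> E \<and> u \<in> V \<and> v \<in> V \<and> u \<noteq> v"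
  using edge by (auto simp: nbrs_def)

lemma inv_recv: assumes "u \<in> nbrs E v" "inv r v \<sigma>" shows "inv r v (recv V w v u (t,dd,s,b) \<sigma>)"
proof (cases "t = r")
  case False
  let ?s = "recv V w v u (t,dd,s,b) \<sigma>"
  have eqs: "\<And>x. lS ?s x r = lS \<sigma> x r" "\<And>x. lB ?s x r = lB \<sigma> x r" "lNH ?s r = lNH \<sigma> r" "lPH ?s r = lPH \<sigma> r"
    using recv_notr[OF False] False by (auto simp: recv_NH recv_PH)
  show ?thesis using assms(2) unfolding inv_def eqs .
next
  case True
  have uv: "u \<noteq> v" using nbrs_edge assms(1) by auto
  have vn: "v \<notin> nbrs E v" using nbrs_edge by blast
  let ?s = "recv V w v u (t,dd,s,b) \<sigma>"
  have nh: "lNH ?s r \<subseteq> nbrs E v" "lPH ?s r \<subseteq> nbrs E v" using assms True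
    by (auto simp: inv_def recv_NH recv_PH)
  have vnh: "v \<notin> lNH \<sigma> r" "v \<notin> lPH \<sigma> r" using assms vn by (auto simp: inv_def)
  have S1: "r \<noteq> v \<longrightarrow> lS ?s v r = (\<Sum>y\<in>lNH ?s r. lS ?s y r)" using recv_S_v[OF uv vnh(1)] True by simp
  have S2: "r = v \<longrightarrow> lS ?s v r = 1" using recv_S_v[OF uv vnh(1)] assms(2) by (auto simp: inv_def)
  have B: "lB ?s v r = lS ?s v r * (\<Sum>y\<in>lPH ?s r. if lS ?s y r = 0 then 0 else (lB ?s y r + 1) / lS ?s y r)"
  proof -
    have "v \<notin> lPH ?s t" using nh(2) vn True by auto
    from recv_B_v_gen[OF this] show ?thesis unfolding True[symmetric] .
  qed
  show ?thesis using nh S1 S2 B by (simp add: inv_def)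
qed

lemma inv_init: "inv r v (init_state v)" "invC v (init_state v)"
  by (auto simp: inv_def invC_def init_state_def)

abbreviation dl where "dl g v \<equiv> deliver V w g v"

lemma deliver_eq: "dl g v \<sigma> (u,t) = recv V w v u (t, lD (g u) t, lS (g u) u t, lB (g u) u t) \<sigma>"
  by (simp add: deliver_def msg_def)

lemma fold_inv: "set xs \<subseteq> nbrs E v \<times> V \<Longrightarrow> inv r v \<sigma> \<Longrightarrow> inv r v (foldl (dl g v) \<sigma> xs)"
proof (induction xs arbitrary: \<sigma>)
  case (Cons x xs)
  obtain u t where x: "x = (u,t)" by (cases x)
  show ?case using Cons x by (simp add: deliver_eq inv_recv)
qed simp

lemma fold_invC: "invC v \<sigma> \<Longrightarrow> invC v (foldl (dl g v) \<sigma> xs)"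
proof (induction xs arbitrary: \<sigma>)
  case (Cons x xs)
  obtain u t where x: "x = (u,t)" by (cases x)
  show ?case using Cons x by (simp add: deliver_eq invC_def recv_C[symmetric])
qed simp

lemma fold_stored:
  assumes "distinct xs" "set xs \<subseteq> nbrs E v \<times> V" "u \<in> nbrs E v"
  shows "lS (foldl (dl g v) \<sigma> xs) u r = (if (u,r) \<in> set xs then lS (g u) u r else lS \<sigma> u r)
       \<and> lB (foldl (dl g v) \<sigma> xs) u r = (if (u,r) \<in> set xs then lB (g u) u r else lB \<sigma> u r)"
  using assms
proof (induction xs arbitrary: \<sigma>)
  case (Cons x xs)
  obtain u' t where x: "x = (u',t)" by (cases x)
  have uv: "u \<noteq> v" using nbrs_edge Cons.prems(3) by auto
  show ?case
  proof (cases "(u,r) \<in> set xs")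
    case True then show ?thesis using Cons by simp
  next
    case False
    then show ?thesis using Cons x uv
      by (auto simp: deliver_eq recv_S_other recv_B_other)
  qed
qed simp

lemma fold_D_le:
  "lD (foldl (dl g v) \<sigma> xs) r \<le> lD \<sigma> r \<and>
   (\<forall>u. (u,r) \<in> set xs \<longrightarrow> lD (foldl (dl g v) \<sigma> xs) r \<le> lD (g u) r + ereal (w {u,v}))"
proof (induction xs arbitrary: \<sigma>)
  case (Cons x xs)
  obtain u' t where x: "x = (u',t)" by (cases x)
  have a: "lD (dl g v \<sigma> x) r \<le> lD \<sigma> r" using x by (auto simp: deliver_eq recv_D)
  have b: "t = r \<Longrightarrow> lD (dl g v \<sigma> x) r \<le> lD (g u') r + ereal (w {u',v})" using x by (auto simp: deliver_eq recv_D)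
  show ?case using Cons.IH[of "dl g v \<sigma> x"] a b x by (auto intro: order_trans)
qed simp

lemma fold_D_lb:
  assumes "r \<in> V" "set xs \<subseteq> nbrs E v \<times> V" "lD \<sigma> r \<ge> ereal (d r v)"
    and "\<forall>u\<in>nbrs E v. lD (g u) r \<ge> ereal (d r u)"
  shows "lD (foldl (dl g v) \<sigma> xs) r \<ge> ereal (d r v)"
  using assms(2,3)
proof (induction xs arbitrary: \<sigma>)
  case (Cons x xs)
  obtain u t where x: "x = (u,t)" by (cases x)
  have u: "u \<in> nbrs E v" using Cons.prems x by auto
  have tri: "d r v \<le> d r u + w {u,v}" using triangle[OF assms(1)] nbrs_edge[OF u] by auto
  have "ereal (d r v) \<le> ereal (d r u) + ereal (w {u,v})" using tri by simp
  also have "\<dots> \<le> lD (g u) r + ereal (w {u,v})" using assms(4) u by (intro add_right_mono) auto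
  finally have "lD (dl g v \<sigma> x) r \<ge> ereal (d r v)" using x Cons.prems by (simp add: deliver_eq recv_D)
  then show ?case using Cons x by simp
qed simp

end



context bcg begin

lemma fold_stable:
  assumes "r \<in> V" "distinct xs" "set xs \<subseteq> nbrs E v \<times> V" "lD \<sigma> r = ereal (d r v)"
    and lb: "\<forall>u\<in>nbrs E v. lD (g u) r \<ge> ereal (d r u)"
  shows "lD (foldl (dl g v) \<sigma> xs) r = ereal (d r v) \<and>
    (\<forall>u\<in>nbrs E v. (u \<in> lNH (foldl (dl g v) \<sigma> xs) r \<longleftrightarrow>
        (if (u,r) \<in> set xs then lD (g u) r + ereal (w {u,v}) = ereal (d r v) else u \<in> lNH \<sigma> r)) \<and>
      (u \<in> lPH (foldl (dl g v) \<sigma> xs) r \<longleftrightarrow>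
        (if (u,r) \<in> set xs then lD (g u) r + ereal (w {u,v}) \<noteq> ereal (d r v) \<and> lD (g u) r - ereal (w {u,v}) = ereal (d r v)
         else u \<in> lPH \<sigma> r)))"
  using assms(2-4)
proof (induction xs arbitrary: \<sigma>)
  case Nil then show ?case by simp
next
  case (Cons x xs)
  obtain u' t where x: "x = (u',t)" by (cases x)
  have u': "u' \<in> nbrs E v" using Cons.prems x by auto
  have tri: "d r v \<le> d r u' + w {u',v}" using triangle[OF assms(1)] nbrs_edge[OF u'] by auto
  have "ereal (d r v) \<le> ereal (d r u') + ereal (w {u',v})" using tri by simp
  also have "\<dots> \<le> lD (g u') r + ereal (w {u',v})" using lb u' by (intro add_right_mono) auto
  finally have ge: "ereal (d r v) \<le> lD (g u') r + ereal (w {u',v})" .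
  let ?s1 = "dl g v \<sigma> x"
  have D1: "lD ?s1 r = ereal (d r v)" using x Cons.prems(3) ge by (auto simp: deliver_eq recv_D)
  have le_iff: "lD (g u') r + ereal (w {u',v}) \<le> ereal (d r v) \<longleftrightarrow> lD (g u') r + ereal (w {u',v}) = ereal (d r v)"
    using ge by auto
  have NH1: "\<And>u. u \<in> lNH ?s1 r \<longleftrightarrow> (if u = u' \<and> t = r then lD (g u') r + ereal (w {u',v}) = ereal (d r v) else u \<in> lNH \<sigma> r)"
    using x Cons.prems(3) ge by (auto simp: deliver_eq recv_NH)
  have PH1: "\<And>u. u \<in> lPH ?s1 r \<longleftrightarrow> (if u = u' \<and> t = r then lD (g u') r + ereal (w {u',v}) \<noteq> ereal (d r v) \<and> lD (g u') r - ereal (w {u',v}) = ereal (d r v) else u \<in> lPH \<sigma> r)"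
    using x Cons.prems(3) le_iff by (auto simp: deliver_eq recv_PH)
  have IH: "lD (foldl (dl g v) ?s1 xs) r = ereal (d r v) \<and>
    (\<forall>u\<in>nbrs E v. (u \<in> lNH (foldl (dl g v) ?s1 xs) r \<longleftrightarrow>
        (if (u,r) \<in> set xs then lD (g u) r + ereal (w {u,v}) = ereal (d r v) else u \<in> lNH ?s1 r)) \<and>
      (u \<in> lPH (foldl (dl g v) ?s1 xs) r \<longleftrightarrow>
        (if (u,r) \<in> set xs then lD (g u) r + ereal (w {u,v}) \<noteq> ereal (d r v) \<and> lD (g u) r - ereal (w {u,v}) = ereal (d r v)
         else u \<in> lPH ?s1 r)))"
    using Cons.IH[of ?s1] Cons.prems D1 by auto
  have nx: "x \<notin> set xs" using Cons.prems by simp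
  show ?case using IH NH1 PH1 x nx by auto
qed

end

locale alg = bcg +
  fixes ord :: "nat \<Rightarrow> 'a \<Rightarrow> ('a \<times> 'a) list"
  assumes vo: "valid_orders V E ord"
begin

abbreviation R where "R \<equiv> run V w ord"

lemma ord_props: "v \<in> V \<Longrightarrow> distinct (ord k v) \<and> set (ord k v) = nbrs E v \<times> V"
  using vo by (simp add: valid_orders_def)

lemma R_Suc: "R (Suc k) v = foldl (dl (R k) v) (R k v) (ord k v)" by simp

lemma G_inv: "v \<in> V \<Longrightarrow> inv r v (R k v) \<and> invC v (R k v)"
proof (induction k arbitrary: v)
  case 0 then show ?case by (simp add: inv_init)
next
  case (Suc k)
  show ?case unfolding R_Suc using Suc ord_props[OF Suc.prems, of k]
    by (auto intro: fold_inv fold_invC)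
qed

lemma G_lb: "r \<in> V \<Longrightarrow> v \<in> V \<Longrightarrow> lD (R k v) r \<ge> ereal (d r v)"
proof (induction k arbitrary: v)
  case 0 then show ?case by (auto simp: init_state_def dist_self)
next
  case (Suc k)
  have "\<forall>u\<in>nbrs E v. lD (R k u) r \<ge> ereal (d r u)" using Suc nbrs_edge by blast
  then show ?case unfolding R_Suc using Suc ord_props[OF Suc.prems(2), of k]
    by (intro fold_D_lb) auto
qed

lemma G_stored: assumes "v \<in> V" "r \<in> V" "u \<in> nbrs E v"
  shows "lS (R (Suc k) v) u r = lS (R k u) u r \<and> lB (R (Suc k) v) u r = lB (R k u) u r"
  unfolding R_Suc using fold_stored[of "ord k v" v u "R k" "R k v" r] ord_props[OF assms(1), of k] assms by auto

lemma G_mono: "lD (R (Suc k) v) r \<le> lD (R k v) r"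
  unfolding R_Suc using fold_D_le by blast

lemma G_D: assumes "r \<in> V" "tw r r x p" "length p \<le> Suc k" shows "lD (R k x) r = ereal (d r x)"
  using assms(2,3)
proof (induction k arbitrary: x p)
  case 0
  then have "p = [r]" "x = r" by (cases p; auto simp: tw_def)+
  then show ?case using assms(1) by (simp add: init_state_def dist_self)
next
  case (Suc k)
  have xV: "x \<in> V" using Suc.prems(1) last_in_set[of p] unfolding tw_def by blast
  show ?case
  proof (cases "length p \<le> Suc k")
    case True
    then have "lD (R k x) r = ereal (d r x)" using Suc by blast
    then show ?thesis using G_mono[of k x r] G_lb[OF assms(1) xV, of "Suc k"] by auto
  next
    case False
    then have lp: "length p = Suc (Suc k)" using Suc.prems by simp
    define q where "q = butlast p"
    have pq: "p = q @ [x]" using Suc.prems(1) append_butlast_last_id[of p] by (simp add: q_def tw_def)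
    have qne: "q \<noteq> []" using lp pq by auto
    have "successively (stp r) (q @ [x])" using Suc.prems(1) pq by (simp add: tw_def)
    then have s: "successively (stp r) q" "stp r (last q) x" using qne by (auto simp: successively_append_iff)
    have twq: "tw r r (last q) q" using Suc.prems(1) pq qne s by (auto simp: tw_def)
    have "length q \<le> Suc k" using lp pq by simp
    then have Du: "lD (R k (last q)) r = ereal (d r (last q))" using Suc.IH twq by blast
    have un: "last q \<in> nbrs E x" using stp_adj[OF s(2)] by (simp add: nbrs_def)
    have "(last q, r) \<in> set (ord k x)" using ord_props[OF xV, of k] un assms(1) by auto
    then have "lD (R (Suc k) x) r \<le> lD (R k (last q)) r + ereal (w {last q, x})"
      unfolding R_Suc using fold_D_le by blast
    also have "\<dots> = ereal (d r x)" using Du s(2) by (simp add: stp_def)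
    finally show ?thesis using G_lb[OF assms(1) xV, of "Suc k"] by auto
  qed
qed

lemma G_NH:
  assumes "v \<in> V" "r \<in> V" "lD (R k v) r = ereal (d r v)"
  shows "\<forall>u\<in>nbrs E v. (u \<in> lNH (R (Suc k) v) r \<longleftrightarrow> lD (R k u) r + ereal (w {u,v}) = ereal (d r v)) \<and>
      (u \<in> lPH (R (Suc k) v) r \<longleftrightarrow> lD (R k u) r + ereal (w {u,v}) \<noteq> ereal (d r v) \<and> lD (R k u) r - ereal (w {u,v}) = ereal (d r v))"
proof -
  have lb: "\<forall>u\<in>nbrs E v. lD (R k u) r \<ge> ereal (d r u)" using G_lb[OF assms(2)] nbrs_edge by blast
  show ?thesis unfolding R_Suc using fold_stable[OF assms(2) _ _ assms(3) lb, of "ord k v"] ord_props[OF assms(1), of k] assms(2)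
    by auto
qed

end



context alg begin

lemma nh_cond: assumes "r \<in> V" "u \<in> nbrs E v" "D \<ge> ereal (d r u)"
  shows "D + ereal (w {u,v}) = ereal (d r v) \<longleftrightarrow> stp r u v \<and> D = ereal (d r u)"
proof -
  have e: "{u,v} \<in> E" using nbrs_edge[OF assms(2)] by simp
  have tri: "d r v \<le> d r u + w {u,v}" using triangle[OF assms(1) e] .
  show ?thesis
  proof
    assume h: "D + ereal (w {u,v}) = ereal (d r v)"
    then obtain y where y: "D = ereal y" by (cases D) auto
    have "y \<ge> d r u" using assms(3) y by simp
    moreover have "y + w {u,v} = d r v" using h y by simp
    ultimately have "y = d r u" using tri by simp
    then show "stp r u v \<and> D = ereal (d r u)" using y e \<open>y + w {u,v} = d r v\<close> by (simp add: stp_def)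
  next
    assume "stp r u v \<and> D = ereal (d r u)"
    then show "D + ereal (w {u,v}) = ereal (d r v)" by (simp add: stp_def)
  qed
qed

lemma ph_cond: assumes "u \<in> nbrs E v"
  shows "(ereal (d r u) + ereal (w {u,v}) \<noteq> ereal (d r v) \<and> ereal (d r u) - ereal (w {u,v}) = ereal (d r v)) \<longleftrightarrow> stp r v u"
proof -
  have e: "{u,v} \<in> E" using nbrs_edge[OF assms] by simp
  have wp: "w {u,v} > 0" using wpos e by simp
  have c: "{v,u} = {u,v}" by auto
  show ?thesis using wp e unfolding stp_def c by auto
qed

lemma stp_nbrs: "stp r u v \<Longrightarrow> u \<in> nbrs E v" "stp r v y \<Longrightarrow> y \<in> nbrs E v"
  by (auto simp: stp_def nbrs_def insert_commute)

lemma stp_V: "stp r u v \<Longrightarrow> u \<in> V \<and> v \<in> V"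
  using edge stp_adj by blast

lemma NH_full: assumes "v \<in> V" "r \<in> V" "lD (R k v) r = ereal (d r v)"
  and "\<forall>u. stp r u v \<longrightarrow> lD (R k u) r = ereal (d r u)"
  shows "lNH (R (Suc k) v) r = {u. stp r u v}"
proof -
  have sub: "lNH (R (Suc k) v) r \<subseteq> nbrs E v" using G_inv[OF assms(1), of r "Suc k"] unfolding inv_def by blast
  have lb: "\<And>u. u \<in> nbrs E v \<Longrightarrow> lD (R k u) r \<ge> ereal (d r u)" using G_lb[OF assms(2)] nbrs_edge by blast
  note G = G_NH[OF assms(1-3)]
  show ?thesis
  proof (intro set_eqI iffI)
    fix u assume "u \<in> lNH (R (Suc k) v) r"
    then show "u \<in> {u. stp r u v}" using sub G nh_cond[OF assms(2) _ lb] by blast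
  next
    fix u assume "u \<in> {u. stp r u v}"
    then have "stp r u v" "u \<in> nbrs E v" using stp_nbrs by auto
    then show "u \<in> lNH (R (Suc k) v) r" using G nh_cond[OF assms(2) _ lb] assms(4) by blast
  qed
qed

lemma PH_full: assumes "v \<in> V" "r \<in> V" "\<forall>u\<in>V. lD (R k u) r = ereal (d r u)"
  shows "lPH (R (Suc k) v) r = {y. stp r v y}"
proof -
  have sub: "lPH (R (Suc k) v) r \<subseteq> nbrs E v" using G_inv[OF assms(1), of r "Suc k"] unfolding inv_def by blast
  note G = G_NH[OF assms(1,2)] 
  have G': "\<forall>u\<in>nbrs E v. (u \<in> lPH (R (Suc k) v) r \<longleftrightarrow> stp r v u)"
    using G assms(1,3) ph_cond nbrs_edge by simp
  show ?thesis
  proof (intro set_eqI iffI)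
    fix u assume "u \<in> lPH (R (Suc k) v) r"
    then show "u \<in> {y. stp r v y}" using sub G' by blast
  next
    fix u assume "u \<in> {y. stp r v y}"
    then show "u \<in> lPH (R (Suc k) v) r" using G' stp_nbrs by blast
  qed
qed

lemma all_D: assumes "r \<in> V" "u \<in> V" "H \<le> k" shows "lD (R k u) r = ereal (d r u)"
proof -
  obtain p where p: "tw r r u p" using tw_exists[OF assms(1,2)] .
  have "length p \<le> Suc k" using hop_bound[OF assms(1) p] assms(3) by simp
  then show ?thesis using G_D[OF assms(1) p] by simp
qed

lemma core_S: assumes "inv r v \<sigma>" "r \<in> V" "r \<noteq> v" "lNH \<sigma> r = {u. stp r u v}"
  and "\<forall>u. stp r u v \<longrightarrow> lS \<sigma> u r = real (tau r r u)"
  shows "lS \<sigma> v r = real (tau r r v)"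
proof -
  have "lS \<sigma> v r = (\<Sum>u\<in>{u. stp r u v}. lS \<sigma> u r)" using assms(1,3,4) by (simp add: inv_def)
  also have "\<dots> = (\<Sum>u\<in>{u. stp r u v}. real (tau r r u))" using assms(5) by simp
  also have "\<dots> = real (tau r r v)" using tau_last[OF assms(2,3)] by simp
  finally show ?thesis .
qed

lemma core_B: assumes "inv r v \<sigma>" "r \<in> V" "v \<in> V" "lS \<sigma> v r = real (tau r r v)" "lPH \<sigma> r = {y. stp r v y}"
  and "\<forall>y. stp r v y \<longrightarrow> lS \<sigma> y r = real (tau r r y) \<and> lB \<sigma> y r = bc_from V E w y r"
  shows "lB \<sigma> v r = bc_from V E w v r"
proof -
  have "lB \<sigma> v r = real (tau r r v) * (\<Sum>y\<in>{y. stp r v y}. if lS \<sigma> y r = 0 then 0 else (lB \<sigma> y r + 1) / lS \<sigma> y r)"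
    using assms(1,4,5) by (simp add: inv_def)
  also have "(\<Sum>y\<in>{y. stp r v y}. if lS \<sigma> y r = 0 then 0 else (lB \<sigma> y r + 1) / lS \<sigma> y r)
      = (\<Sum>y\<in>{y. stp r v y}. (bc_from V E w y r + 1) / real (tau r r y))"
  proof (intro sum.cong refl)
    fix y assume "y \<in> {y. stp r v y}"
    then have st: "stp r v y" by simp
    then have "tau r r y > 0" using tau_pos[OF assms(2)] stp_V by blast
    then show "(if lS \<sigma> y r = 0 then 0 else (lB \<sigma> y r + 1) / lS \<sigma> y r) = (bc_from V E w y r + 1) / real (tau r r y)"
      using assms(6) st by simp
  qed
  finally show ?thesis using brandes[OF assms(2,3)] by simp
qed

lemma S_level: assumes "r \<in> V"
  shows "\<forall>v\<in>V. (\<forall>p. tw r r v p \<longrightarrow> length p \<le> Suc j) \<longrightarrow> (\<forall>k>j. lS (R k v) v r = real (tau r r v))"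
proof (induction j)
  case 0
  show ?case
  proof (intro ballI impI allI)
    fix v and k :: nat assume v: "v \<in> V" and h: "\<forall>p. tw r r v p \<longrightarrow> length p \<le> Suc 0" and "0 < k"
    obtain p where p: "tw r r v p" using tw_exists[OF assms v] .
    have "v = r" using tw_len2[OF p] h p by (cases "r = v") auto
    then show "lS (R k v) v r = real (tau r r v)" using G_inv[OF v, of r k] tau_self[OF assms assms]
      by (simp add: inv_def)
  qed
next
  case (Suc j)
  show ?case
  proof (intro ballI impI allI)
    fix v and k :: nat assume v: "v \<in> V" and h: "\<forall>p. tw r r v p \<longrightarrow> length p \<le> Suc (Suc j)" and k: "Suc j < k"
    show "lS (R k v) v r = real (tau r r v)"
    proof (cases "v = r")
      case True
      then show ?thesis using G_inv[OF v, of r k] tau_self[OF assms assms] by (simp add: inv_def)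
    next
      case False
      obtain k' where k': "k = Suc k'" "j < k'" using k by (cases k) auto
      obtain p where p: "tw r r v p" using tw_exists[OF assms v] .
      have Dv: "lD (R k' v) r = ereal (d r v)" using G_D[OF assms p] h p k' by force
      have pu: "\<forall>q. tw r r u q \<longrightarrow> length q \<le> Suc j" if "stp r u v" for u
        using h tw_snoc[OF _ that] by fastforce
      have Du: "\<forall>u. stp r u v \<longrightarrow> lD (R k' u) r = ereal (d r u)"
      proof (intro allI impI)
        fix u assume st: "stp r u v"
        obtain q where q: "tw r r u q" using tw_exists[OF assms] stp_V[OF st] by blast
        show "lD (R k' u) r = ereal (d r u)" using G_D[OF assms q] pu[OF st] q k' by force
      qed
      have NH: "lNH (R k v) r = {u. stp r u v}" using NH_full[OF v assms Dv Du] k' by simp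
      have Su: "\<forall>u. stp r u v \<longrightarrow> lS (R k v) u r = real (tau r r u)"
      proof (intro allI impI)
        fix u assume st: "stp r u v"
        have "lS (R k v) u r = lS (R k' u) u r" using G_stored[OF v assms stp_nbrs(1)[OF st]] k' by simp
        also have "\<dots> = real (tau r r u)" using Suc.IH stp_V[OF st] pu[OF st] k' by blast
        finally show "lS (R k v) u r = real (tau r r u)" .
      qed
      show ?thesis using core_S[OF G_inv[OF v, THEN conjunct1] assms _ NH Su] False by simp
    qed
  qed
qed

lemma S_all: assumes "r \<in> V" "v \<in> V" "H < k" shows "lS (R k v) v r = real (tau r r v)"
  using S_level[OF assms(1), of H] hop_bound[OF assms(1)] assms by blast

lemma NHPH_all: assumes "r \<in> V" "v \<in> V" "H < k"
  shows "lNH (R k v) r = {u. stp r u v} \<and> lPH (R k v) r = {y. stp r v y}"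
proof -
  obtain k' where k': "k = Suc k'" "H \<le> k'" using assms(3) by (cases k) auto
  have D: "\<forall>u\<in>V. lD (R k' u) r = ereal (d r u)" using all_D[OF assms(1) _ k'(2)] by blast
  have "lNH (R (Suc k') v) r = {u. stp r u v}"
    using NH_full[OF assms(2,1)] D assms(2) stp_V by blast
  moreover have "lPH (R (Suc k') v) r = {y. stp r v y}" using PH_full[OF assms(2,1) D] .
  ultimately show ?thesis using k' by simp
qed

end



context alg begin

lemma stp_pos: assumes "r \<in> V" "stp r v y" shows "y \<noteq> r"
proof -
  have "d r y = d r v + w {v,y}" "w {v,y} > 0" "d r v \<ge> 0"
    using assms wpos stp_V[OF assms(2)] dist_nonneg[OF assms(1)] by (auto simp: stp_def)
  then show ?thesis using dist_self[OF assms(1)] by auto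
qed

lemma B_level: assumes "r \<in> V"
  shows "\<forall>v\<in>V. v \<noteq> r \<longrightarrow> (\<forall>x p. tw r v x p \<longrightarrow> length p \<le> Suc j) \<longrightarrow> (\<forall>k>H + j. lB (R k v) v r = bc_from V E w v r)"
proof (induction j)
  case 0
  show ?case
  proof (intro ballI impI allI)
    fix v and k :: nat assume v: "v \<in> V" and vr: "v \<noteq> r" and h: "\<forall>x p. tw r v x p \<longrightarrow> length p \<le> Suc 0" and k: "H + 0 < k"
    have nos: "\<not> stp r v y" for y
    proof
      assume st: "stp r v y"
      have "tw r y y [y]" using stp_V[OF st] by (simp add: tw_def)
      then have "tw r v y [v, y]" using tw_cons[OF st] by simp
      then show False using h by fastforce
    qed
    have PH: "lPH (R k v) r = {y. stp r v y}" using NHPH_all[OF assms v] k by simp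
    show "lB (R k v) v r = bc_from V E w v r"
      using core_B[OF G_inv[OF v, THEN conjunct1] assms v S_all[OF assms v] PH] nos k by auto
  qed
next
  case (Suc j)
  show ?case
  proof (intro ballI impI allI)
    fix v and k :: nat assume v: "v \<in> V" and vr: "v \<noteq> r" and h: "\<forall>x p. tw r v x p \<longrightarrow> length p \<le> Suc (Suc j)" and k: "H + Suc j < k"
    obtain k' where k': "k = Suc k'" "H + j < k'" using k by (cases k) auto
    have PH: "lPH (R k v) r = {y. stp r v y}" using NHPH_all[OF assms v] k by simp
    have Y: "\<forall>y. stp r v y \<longrightarrow> lS (R k v) y r = real (tau r r y) \<and> lB (R k v) y r = bc_from V E w y r"
    proof (intro allI impI)
      fix y assume st: "stp r v y"
      have yV: "y \<in> V" using stp_V[OF st] by simp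
      have st1: "lS (R k v) y r = lS (R k' y) y r \<and> lB (R k v) y r = lB (R k' y) y r"
        using G_stored[OF v assms stp_nbrs(2)[OF st]] k' by simp
      have "\<forall>x p. tw r y x p \<longrightarrow> length p \<le> Suc j"
        using h tw_cons[OF st] by fastforce
      then have "lB (R k' y) y r = bc_from V E w y r" using Suc.IH yV stp_pos[OF assms st] k' by blast
      moreover have "lS (R k' y) y r = real (tau r r y)" using S_all[OF assms yV] k' by simp
      ultimately show "lS (R k v) y r = real (tau r r y) \<and> lB (R k v) y r = bc_from V E w y r" using st1 by simp
    qed
    show "lB (R k v) v r = bc_from V E w v r"
      using core_B[OF G_inv[OF v, THEN conjunct1] assms v S_all[OF assms v] PH Y] k by auto
  qed
qed

lemma H_pos: assumes "r \<in> V" "v \<in> V" "v \<noteq> r" shows "H \<ge> 1"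
proof -
  obtain q where q: "tw r r v q" using tw_exists[OF assms(1,2)] .
  show ?thesis using tw_len2[OF q] assms(3) hop_bound[OF assms(1) q] by simp
qed

lemma B_all: assumes "r \<in> V" "v \<in> V" "v \<noteq> r" "2 * H \<le> k" shows "lB (R k v) v r = bc_from V E w v r"
proof -
  obtain q where q: "tw r r v q" using tw_exists[OF assms(1,2)] .
  have lq: "length q \<ge> 2" using tw_len2[OF q] assms(3) by simp
  have h: "\<forall>x p. tw r v x p \<longrightarrow> length p \<le> Suc (H - 1)"
  proof (intro allI impI)
    fix x p assume p: "tw r v x p"
    have "tw r r x (q @ tl p)" using tw_concat[OF q p] .
    then have "length (q @ tl p) \<le> Suc H" using hop_bound[OF assms(1)] by blast
    moreover have "p \<noteq> []" using p by (simp add: tw_def)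
    ultimately show "length p \<le> Suc (H - 1)" using lq by simp
  qed
  have "H \<ge> 1" using H_pos[OF assms(1-3)] .
  then have "H + (H - 1) < k" using assms(4) by simp
  then show ?thesis using B_level[OF assms(1), of "H - 1"] assms(2,3) h by blast
qed

lemma final_target:
  assumes v: "v \<in> V" and x: "x \<in> V" "x \<noteq> v" and p: "2 * H + 1 \<le> p"
    and xs: "distinct xs" "set xs \<subseteq> nbrs E v \<times> V"
  shows "lB (foldl (dl (R p) v) (R p v) xs) v x = bc_from V E w v x"
proof -
  let ?s = "foldl (dl (R p) v) (R p v) xs"
  have H1: "H \<ge> 1" using H_pos[OF x(1) v] x(2) by simp
  obtain p' where p': "p = Suc p'" "2 * H \<le> p'" using p by (cases p) auto
  have Hp: "H < p" "H < p'" using p' H1 by auto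
  have inv: "inv x v ?s" using fold_inv[OF xs(2)] G_inv[OF v] by blast
  have D0: "lD (R p v) x = ereal (d x v)" using all_D[OF x(1) v] Hp by simp
  have lb: "\<forall>u\<in>nbrs E v. lD (R p u) x \<ge> ereal (d x u)" using G_lb[OF x(1)] nbrs_edge by blast
  have Dall: "\<And>u. u \<in> nbrs E v \<Longrightarrow> lD (R p u) x = ereal (d x u)" using all_D[OF x(1)] Hp nbrs_edge by force
  note FS = fold_stable[OF x(1) xs D0 lb]
  note NP = NHPH_all[OF x(1) v Hp(1)]
  have sub: "lNH ?s x \<subseteq> nbrs E v" "lPH ?s x \<subseteq> nbrs E v" using inv by (auto simp: inv_def)
  have NH: "lNH ?s x = {u. stp x u v}"
  proof (intro set_eqI iffI)
    fix u assume u: "u \<in> lNH ?s x"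
    then have un: "u \<in> nbrs E v" using sub by blast
    then show "u \<in> {u. stp x u v}" using FS u NP nh_cond[OF x(1) un lb[rule_format, OF un]] Dall[OF un]
      by (auto split: if_splits)
  next
    fix u assume "u \<in> {u. stp x u v}"
    then have st: "stp x u v" and un: "u \<in> nbrs E v" using stp_nbrs by auto
    then show "u \<in> lNH ?s x" using FS NP nh_cond[OF x(1) un lb[rule_format, OF un]] Dall[OF un] by auto
  qed
  have PH: "lPH ?s x = {y. stp x v y}"
  proof (intro set_eqI iffI)
    fix u assume u: "u \<in> lPH ?s x"
    then have un: "u \<in> nbrs E v" using sub by blast
    then show "u \<in> {y. stp x v y}" using FS u NP ph_cond[OF un] Dall[OF un]
      by (auto split: if_splits)
  next
    fix u assume "u \<in> {y. stp x v y}"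
    then have st: "stp x v u" and un: "u \<in> nbrs E v" using stp_nbrs by auto
    then show "u \<in> lPH ?s x" using FS NP ph_cond[OF un] Dall[OF un] by auto
  qed
  have stored: "lS ?s u x = real (tau x x u) \<and> (u \<noteq> x \<longrightarrow> lB ?s u x = bc_from V E w u x)" if un: "u \<in> nbrs E v" for u
  proof -
    have uV: "u \<in> V" using nbrs_edge[OF un] by simp
    have a: "lS ?s u x = (if (u,x) \<in> set xs then lS (R p u) u x else lS (R p v) u x)
       \<and> lB ?s u x = (if (u,x) \<in> set xs then lB (R p u) u x else lB (R p v) u x)"
      using fold_stored[OF xs un] by blast
    have b: "lS (R p v) u x = lS (R p' u) u x \<and> lB (R p v) u x = lB (R p' u) u x"
      using G_stored[OF v x(1) un] p' by simp
    have c: "lS (R p u) u x = real (tau x x u)" "lS (R p' u) u x = real (tau x x u)"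
      using S_all[OF x(1) uV] Hp by auto
    have e: "u \<noteq> x \<Longrightarrow> lB (R p u) u x = bc_from V E w u x \<and> lB (R p' u) u x = bc_from V E w u x"
    proof -
      assume ux: "u \<noteq> x"
      have "2 * H \<le> p" using p by simp
      then show ?thesis using B_all[OF x(1) uV ux] p'(2) by blast
    qed
    show ?thesis using a b c e by auto
  qed
  have S: "lS ?s v x = real (tau x x v)"
    using core_S[OF inv x(1) x(2) NH] stored stp_nbrs(1) by blast
  show ?thesis
    using core_B[OF inv x(1) v S PH] stored stp_nbrs(2) stp_pos[OF x(1)] by blast
qed

end

lemma bc_identity:
  assumes "card V \<ge> 3"
  shows "(\<Sum>s\<in>V - {v}. bc_from V E w v s) = real (card V - 1) * real (card V - 2) * bc V E w v"
proof -
  have "real (card V - 1) * real (card V - 2) \<noteq> 0" using assms by auto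
  then show ?thesis by (simp add: bc_def bc_from_def)
qed

theorem theorem1:
  fixes V :: "'a set" and E :: "'a set set" and w :: "'a set \<Rightarrow> real"
    and ord :: "nat \<Rightarrow> 'a \<Rightarrow> ('a \<times> 'a) list"
  assumes "wgraph V E w" and "connected_graph V E" and "card V \<ge> 3"
    and "valid_orders V E ord"
    and "v \<in> V"
    and "2 * hopdiam V E w + 1 \<le> p"
    and "j \<le> length (ord p v)"
  shows "lC (foldl (deliver V w (run V w ord p) v) (run V w ord p v) (take j (ord p v)))
           = (\<Sum>s\<in>V - {v}. bc_from V E w v s)
       \<and> (\<Sum>s\<in>V - {v}. bc_from V E w v s) = real (card V - 1) * real (card V - 2) * bc V E w v"
proof
  interpret alg V E w ord using assms(1,2,4) by unfold_locales
  let ?xs = "take j (ord p v)"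
  let ?s = "foldl (deliver V w (run V w ord p) v) (run V w ord p v) ?xs"
  have op: "distinct (ord p v) \<and> set (ord p v) = nbrs E v \<times> V" using ord_props[OF assms(5)] .
  have xs: "distinct ?xs" "set ?xs \<subseteq> nbrs E v \<times> V" using op by (auto dest: in_set_takeD)
  have "invC v ?s" using fold_invC G_inv[OF assms(5)] by blast
  then have "lC ?s = (\<Sum>x\<in>V-{v}. lB ?s v x)" by (simp add: invC_def)
  also have "\<dots> = (\<Sum>x\<in>V-{v}. bc_from V E w v x)"
    using final_target[OF assms(5) _ _ assms(6) xs] by (intro sum.cong refl) auto
  finally show "lC ?s = (\<Sum>s\<in>V - {v}. bc_from V E w v s)" .
next
  show "(\<Sum>s\<in>V - {v}. bc_from V E w v s) = real (card V - 1) * real (card V - 2) * bc V E w v"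
    using bc_identity[OF assms(3)] .
qed


end
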